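(* Let $\mathcal{X}\subset\mathbb{R}^N$ be convex and compact, and let $f_{t+1}:\mathbb{R}^N\to\mathbb{R}$ be differentiable and convex with $L$-Lipschitz gradient on $\mathcal{X}$, i.e. $\|\nabla f_{t+1}(\mathbf{x})-\nabla f_{t+1}(\mathbf{y})\|\le L\|\mathbf{x}-\mathbf{y}\|$ for all $\mathbf{x},\mathbf{y}\in\mathcal{X}$, where $0<L<\infty$. Let $\bar{\mathbf{x}}_{t+1}\in\mathcal{X}$, and let $\mathbf{g}_t\in\mathbb{R}^N$ and $\epsilon>0$ satisfy $\|\mathbf{g}_t-\nabla f_{t+1}(\bar{\mathbf{x}}_{t+1})\|\le\epsilon$, with $\|\mathbf{g}_t\|>\epsilon$. Let $\delta>0$ and $0<\beta\le 1/L$, and define the predictive update $\mathbf{x}_{t+1}=\mathrm{proj}_{\mathcal{X}}(\bar{\mathbf{x}}_{t+1}-\beta\mathbf{g}_t)$ and $\mathbf{d}_{t+1}=\mathbf{x}_{t+1}-\bar{\mathbf{x}}_{t+1}$. If $$\|\mathbf{d}_{t+1}\|\ge\frac{\epsilon}{L}+\sqrt{\frac{\epsilon^2}{L^2}+\frac{2\delta}{L}},$$ then $f_{t+1}(\mathbf{x}_{t+1})\le f_{t+1}(\bar{\mathbf{x}}_{t+1})-\delta$, i.e. the predictive update strictly improves on the OCO update $\bar{\mathbf{x}}_{t+1}$ by at least $\delta$.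
   Context: $\|\cdot\|$ is the Euclidean norm and $\mathrm{proj}_{\mathcal{X}}(\mathbf{x})\in\arg\min_{\mathbf{y}\in\mathcal{X}}\|\mathbf{x}-\mathbf{y}\|$. In the paper's online setting, $\bar{\mathbf{x}}_{t+1}$ is the decision computed by an online convex optimization (OCO) update at round $t$, and $\mathbf{g}_t$ is an estimate ($\epsilon$-forecaster) of the gradient of the next-round loss $f_{t+1}$ at $\bar{\mathbf{x}}_{t+1}$ with error at most $\epsilon$. *)

theory Defs
  imports "HOL-Analysis.Analysis"
begin

end

theory Submission
  imports Defs
begin

lemma line_deriv:
  fixes f :: "real ^ 'n \<Rightarrow> real" and grad :: "real ^ 'n \<Rightarrow> real ^ 'n"
  assumes "\<And>y. (f has_derivative (\<lambda>h. grad y \<bullet> h)) (at y)"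
  shows "((\<lambda>t. f (a + t *\<^sub>R d)) has_real_derivative (grad (a + t *\<^sub>R d) \<bullet> d)) (at t)"
proof -
  have l: "((\<lambda>t. a + t *\<^sub>R d) has_derivative (\<lambda>h. h *\<^sub>R d)) (at t)"
    by (auto intro!: derivative_eq_intros)
  have "((\<lambda>t. f (a + t *\<^sub>R d)) has_derivative (\<lambda>h. grad (a + t *\<^sub>R d) \<bullet> (h *\<^sub>R d))) (at t)"
    using has_derivative_compose[OF l assms] by (simp add: o_def)
  then show ?thesis unfolding has_field_derivative_def
    by (rule has_derivative_eq_rhs) (auto simp: fun_eq_iff mult.commute)
qed

theorem lemma3:
  fixes X :: "(real ^ 'n) set"
    and f :: "real ^ 'n \<Rightarrow> real"
    and grad :: "real ^ 'n \<Rightarrow> real ^ 'n"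
    and xbar g x :: "real ^ 'n"
    and L \<epsilon> \<delta> \<beta> :: real
  assumes "convex X" and "compact X"
    and "\<And>y. (f has_derivative (\<lambda>h. grad y \<bullet> h)) (at y)"
    and "convex_on UNIV f"
    and "\<And>y z. y \<in> X \<Longrightarrow> z \<in> X \<Longrightarrow> norm (grad y - grad z) \<le> L * norm (y - z)"
    and "0 < L"
    and "xbar \<in> X"
    and "\<epsilon> > 0"
    and "norm (g - grad xbar) \<le> \<epsilon>"
    and "norm g > \<epsilon>"
    and "\<delta> > 0"
    and "0 < \<beta>" and "\<beta> \<le> 1 / L"
    and "x \<in> X"
    and "\<And>y. y \<in> X \<Longrightarrow> norm ((xbar - \<beta> *\<^sub>R g) - x) \<le> norm ((xbar - \<beta> *\<^sub>R g) - y)"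
    and "norm (x - xbar) \<ge> \<epsilon> / L + sqrt (\<epsilon>\<^sup>2 / L\<^sup>2 + 2 * \<delta> / L)"
  shows "f x \<le> f xbar - \<delta>"
proof -
  define d where "d = x - xbar"
  define r where "r = norm d"
  have x_eq: "x = xbar + d" unfolding d_def by simp
  define \<psi> where "\<psi> t = f (xbar + t *\<^sub>R d) - t * (grad xbar \<bullet> d) - L * t\<^sup>2 * r\<^sup>2 / 2" for t
  have "\<psi> 0 \<ge> \<psi> 1"
  proof (rule DERIV_nonpos_imp_nonincreasing[of 0 1 \<psi>])
    fix t :: real assume t: "0 \<le> t" "t \<le> 1"
    have D: "(\<psi> has_real_derivative
        (grad (xbar + t *\<^sub>R d) \<bullet> d - grad xbar \<bullet> d - L * t * r\<^sup>2)) (at t)"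
      unfolding \<psi>_def
      by (rule line_deriv[OF assms(3)] derivative_eq_intros refl | simp)+
    have mem: "xbar + t *\<^sub>R d \<in> X"
    proof -
      have "xbar + t *\<^sub>R d = (1 - t) *\<^sub>R xbar + t *\<^sub>R x" unfolding d_def
        by (simp add: algebra_simps)
      then show ?thesis using convexD_alt[OF assms(1) assms(7) assms(14)] t by simp
    qed
    have "grad (xbar + t *\<^sub>R d) \<bullet> d - grad xbar \<bullet> d = (grad (xbar + t *\<^sub>R d) - grad xbar) \<bullet> d"
      by (simp add: inner_diff_left)
    also have "\<dots> \<le> norm (grad (xbar + t *\<^sub>R d) - grad xbar) * r"
      unfolding r_def by (rule norm_cauchy_schwarz)
    also have "\<dots> \<le> (L * norm (t *\<^sub>R d)) * r"
      using assms(5)[OF mem assms(7)] r_def by (intro mult_right_mono) auto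
    also have "\<dots> = L * t * r\<^sup>2" using t by (simp add: r_def power2_eq_square)
    finally have "grad (xbar + t *\<^sub>R d) \<bullet> d - grad xbar \<bullet> d - L * t * r\<^sup>2 \<le> 0" by linarith
    then show "\<exists>y. (\<psi> has_real_derivative y) (at t) \<and> y \<le> 0" using D by blast
  qed simp
  hence desc: "f x \<le> f xbar + grad xbar \<bullet> d + L * r\<^sup>2 / 2"
    unfolding \<psi>_def x_eq by simp
  have "inner ((xbar - \<beta> *\<^sub>R g) - x) (xbar - x) \<le> 0"
    apply (rule any_closest_point_dot[OF assms(1) compact_imp_closed[OF assms(2)] assms(14) assms(7)])
    using assms(15) by (simp add: dist_norm)
  hence "inner (- d - \<beta> *\<^sub>R g) (- d) \<le> 0" unfolding d_def by (simp add: algebra_simps)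
  hence "r\<^sup>2 + \<beta> * (g \<bullet> d) \<le> 0" unfolding r_def
    by (simp add: inner_diff_left inner_add_left power2_norm_eq_inner algebra_simps)
  hence gd: "g \<bullet> d \<le> - L * r\<^sup>2"
  proof -
    assume h: "r\<^sup>2 + \<beta> * (g \<bullet> d) \<le> 0"
    have "\<beta> * L \<le> 1" using assms(13,6) by (simp add: field_simps)
    hence "\<beta> * (L * r\<^sup>2) \<le> r\<^sup>2" by (metis mult.assoc mult_right_mono mult_1 zero_le_power2 mult.commute)
    hence "\<beta> * (g \<bullet> d) \<le> \<beta> * (- L * r\<^sup>2)" using h by simp
    thus ?thesis using assms(12) by (metis mult_minus_right mult_le_cancel_left_pos)
  qed
  have "(grad xbar - g) \<bullet> d \<le> norm (grad xbar - g) * r" unfolding r_def by (rule norm_cauchy_schwarz)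
  also have "\<dots> \<le> \<epsilon> * r" using assms(9) by (intro mult_right_mono) (auto simp: r_def norm_minus_commute)
  finally have ge: "grad xbar \<bullet> d \<le> g \<bullet> d + \<epsilon> * r" by (simp add: inner_diff_left)
  have key: "f x \<le> f xbar - L * r\<^sup>2 / 2 + \<epsilon> * r" using desc gd ge by simp
  define s where "s = sqrt (\<epsilon>\<^sup>2 / L\<^sup>2 + 2 * \<delta> / L)"
  have s0: "s \<ge> 0" unfolding s_def using assms(6,11) by (intro real_sqrt_ge_zero add_nonneg_nonneg) auto
  have s2: "s\<^sup>2 = \<epsilon>\<^sup>2 / L\<^sup>2 + 2 * \<delta> / L" unfolding s_def
    using assms(6,11) by (intro real_sqrt_pow2) simp
  have rge: "r - \<epsilon> / L \<ge> s" using assms(16) unfolding s_def r_def d_def by simp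
  hence "(r - \<epsilon> / L)\<^sup>2 \<ge> s\<^sup>2" using s0 by (intro power_mono) auto
  hence "(r - \<epsilon> / L)\<^sup>2 \<ge> \<epsilon>\<^sup>2 / L\<^sup>2 + 2 * \<delta> / L" using s2 by simp
  hence "L * (r - \<epsilon> / L)\<^sup>2 \<ge> L * (\<epsilon>\<^sup>2 / L\<^sup>2 + 2 * \<delta> / L)" using assms(6) by simp
  moreover have "L * (r - \<epsilon> / L)\<^sup>2 = L * r\<^sup>2 - 2 * \<epsilon> * r + \<epsilon>\<^sup>2 / L"
    using assms(6) by (simp add: power2_eq_square field_simps)
  moreover have "L * (\<epsilon>\<^sup>2 / L\<^sup>2 + 2 * \<delta> / L) = \<epsilon>\<^sup>2 / L + 2 * \<delta>"
    using assms(6) by (simp add: power2_eq_square field_simps)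
  ultimately have "L * r\<^sup>2 - 2 * \<epsilon> * r \<ge> 2 * \<delta>" by linarith
  thus ?thesis using key by simp
qed

end
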